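(* Let $f:[0,1]\to[0,1]$ be a surjective continuous function. If $f$ admits a periodic point of period $m$ for some $m>2$, then $f$ admits a splitting sequence.
   Context: A point $x$ is periodic of period $m$ if $f^m(x)=x$ and $f^i(x)\neq x$ for $0<i<m$. A sequence $(T_n)_{n\in\mathbb N}$ of closed intervals $T_n\subsetneq[0,1]$ (possibly degenerate) is tight if $f(T_{n+1})=T_n$ for every $n$ and $T_n$ is nondegenerate for all sufficiently large $n$. A tight sequence $(T_n)$, $T_n=[l_n,r_n]$, is a splitting sequence admitted by $f$ if there are an infinite set $N\subseteq\mathbb N$ and nondegenerate closed intervals $S_n\subseteq[0,1]$ ($n\in N$) with $S_n\cap T_n\subseteq\{l_n,r_n\}$ and $f(S_n)=f(T_n)$ for all $n\in N$. *)

theory Defs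
  imports "HOL-Analysis.Analysis"
begin

definition periodic_point :: "(real \<Rightarrow> real) \<Rightarrow> nat \<Rightarrow> real \<Rightarrow> bool" where
  "periodic_point f m x \<longleftrightarrow> (f ^^ m) x = x \<and> (\<forall>i. 0 < i \<and> i < m \<longrightarrow> (f ^^ i) x \<noteq> x)"

definition tight_seq :: "(real \<Rightarrow> real) \<Rightarrow> (nat \<Rightarrow> real) \<Rightarrow> (nat \<Rightarrow> real) \<Rightarrow> bool" where
  "tight_seq f l r \<longleftrightarrow>
     (\<forall>n. 0 \<le> l n \<and> l n \<le> r n \<and> r n \<le> 1 \<and> {l n..r n} \<noteq> {0..1}) \<and>
     (\<forall>n. f ` {l (Suc n)..r (Suc n)} = {l n..r n}) \<and>
     (\<exists>n0. \<forall>n\<ge>n0. l n < r n)"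

definition splitting_seq :: "(real \<Rightarrow> real) \<Rightarrow> (nat \<Rightarrow> real) \<Rightarrow> (nat \<Rightarrow> real) \<Rightarrow> bool" where
  "splitting_seq f l r \<longleftrightarrow> tight_seq f l r \<and>
     (\<exists>N::nat set. infinite N \<and>
        (\<forall>n\<in>N. \<exists>a b. 0 \<le> a \<and> a < b \<and> b \<le> 1 \<and>
            {a..b} \<inter> {l n..r n} \<subseteq> {l n, r n} \<and>
            f ` {a..b} = f ` {l n..r n}))"

definition admits_splitting_seq :: "(real \<Rightarrow> real) \<Rightarrow> bool" where
  "admits_splitting_seq f \<longleftrightarrow> (\<exists>l r. splitting_seq f l r)"

end

theory Submission
  imports Defs
begin

lemma conn_sub:
  fixes S :: "real set"
  assumes "connected S" "p \<in> S" "q \<in> S"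
  shows "{min p q..max p q} \<subseteq> S"
proof
  fix x assume x: "x \<in> {min p q..max p q}"
  have *: "\<And>a b z. a \<in> S \<Longrightarrow> b \<in> S \<Longrightarrow> a \<le> z \<Longrightarrow> z \<le> b \<Longrightarrow> z \<in> S"
    using assms(1) unfolding connected_iff_interval by blast
  show "x \<in> S"
  proof (cases "p \<le> q")
    case True thus ?thesis using *[of p q x] assms x by auto
  next
    case False thus ?thesis using *[of q p x] assms x by auto
  qed
qed

lemma compact_sub_Icc:
  fixes f :: "real \<Rightarrow> real"
  assumes "continuous_on {x..y} f"
  shows "compact {z \<in> {x..y}. f z = c}"
proof -
  have "closed {z \<in> {x..y}. f z = c}"
    by (rule continuous_closed_preimage_constant[OF assms closed_atLeastAtMost])
  moreover have "bounded {z \<in> {x..y}. f z = c}"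
    by (rule bounded_subset[of "{x..y}"]) auto
  ultimately show ?thesis using compact_eq_bounded_closed by blast
qed

lemma cover_pos:
  fixes f :: "real \<Rightarrow> real"
  assumes cont: "continuous_on {a..b} f" and s: "s \<in> {a..b}" and t: "t \<in> {a..b}" and st: "s \<le> t"
    and fs: "f s = c" and ft: "f t = d" and cd: "c < d"
  shows "\<exists>a' b'. a \<le> a' \<and> a' < b' \<and> b' \<le> b \<and> f ` {a'..b'} = {c..d}"
proof -
  define Z where "Z = {x \<in> {s..t}. f x = c}"
  have contst: "continuous_on {s..t} f" using cont s t by (auto intro: continuous_on_subset)
  have "compact Z" unfolding Z_def by (rule compact_sub_Icc[OF contst])
  moreover have "Z \<noteq> {}" using fs st by (auto simp: Z_def)
  ultimately obtain s' where s'Z: "s' \<in> Z" and s'max: "\<forall>z\<in>Z. z \<le> s'"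
    using compact_attains_sup by blast
  have s': "s \<le> s'" "s' \<le> t" "f s' = c" using s'Z by (auto simp: Z_def)
  define W where "W = {x \<in> {s'..t}. f x = d}"
  have contst2: "continuous_on {s'..t} f" using contst s' by (auto intro: continuous_on_subset)
  have "compact W" unfolding W_def by (rule compact_sub_Icc[OF contst2])
  moreover have "W \<noteq> {}" using ft s' by (auto simp: W_def)
  ultimately obtain t' where t'W: "t' \<in> W" and t'min: "\<forall>z\<in>W. t' \<le> z"
    using compact_attains_inf by blast
  have t': "s' \<le> t'" "t' \<le> t" "f t' = d" using t'W by (auto simp: W_def)
  have lt: "s' < t'" using s' t' cd by (metis order.not_eq_order_implies_strict order_less_irrefl)
  have contst': "continuous_on {s'..t'} f" using contst s' t' by (auto intro: continuous_on_subset)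
  have sub: "f ` {s'..t'} \<subseteq> {c..d}"
  proof
    fix y assume "y \<in> f ` {s'..t'}"
    then obtain z where z: "s' \<le> z" "z \<le> t'" "y = f z" by auto
    show "y \<in> {c..d}"
    proof (rule ccontr)
      assume "y \<notin> {c..d}"
      hence "f z < c \<or> f z > d" using z by auto
      thus False
      proof
        assume lt2: "f z < c"
        have "continuous_on {z..t'} f" using contst' z by (auto intro: continuous_on_subset)
        then obtain w where w: "z \<le> w" "w \<le> t'" "f w = c"
          using IVT'[of f z c t'] lt2 t' cd z by auto
        have "w \<in> Z" using w z s' t' by (auto simp: Z_def)
        hence "w \<le> s'" using s'max by auto
        hence "z = s'" using w z by auto
        thus False using lt2 s' by auto
      next
        assume gt: "f z > d"
        have "continuous_on {s'..z} f" using contst' z by (auto intro: continuous_on_subset)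
        then obtain w where w: "s' \<le> w" "w \<le> z" "f w = d"
          using IVT'[of f s' d z] gt s' cd z by auto
        have "w \<in> W" using w z s' t' by (auto simp: W_def)
        hence "t' \<le> w" using t'min by auto
        hence "z = t'" using w z by auto
        thus False using gt t' by auto
      qed
    qed
  qed
  have "connected (f ` {s'..t'})"
    by (rule connected_continuous_image[OF contst' connected_Icc])
  hence "{min c d..max c d} \<subseteq> f ` {s'..t'}"
    using conn_sub[of "f ` {s'..t'}" c d] s' t' lt by (metis atLeastAtMost_iff image_eqI less_imp_le order_refl)
  hence "{c..d} \<subseteq> f ` {s'..t'}" using cd by auto
  with sub have "f ` {s'..t'} = {c..d}" by blast
  moreover have "a \<le> s'" "t' \<le> b" using s t s' t' by auto
  ultimately show ?thesis using lt by blast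
qed

lemma cover:
  fixes f :: "real \<Rightarrow> real"
  assumes cont: "continuous_on {a..b} f" and cd: "c < d"
    and c: "c \<in> f ` {a..b}" and d: "d \<in> f ` {a..b}"
  shows "\<exists>a' b'. a \<le> a' \<and> a' < b' \<and> b' \<le> b \<and> f ` {a'..b'} = {c..d}"
proof -
  obtain s where s: "s \<in> {a..b}" "f s = c" using c by auto
  obtain t where t: "t \<in> {a..b}" "f t = d" using d by auto
  show ?thesis
  proof (cases "s \<le> t")
    case True
    then show ?thesis using cover_pos[OF cont s(1) t(1) True s(2) t(2) cd] by blast
  next
    case False
    define g where "g x = f (- x)" for x
    have contg: "continuous_on {-b..-a} g"
      unfolding g_def
      by (rule continuous_on_compose2[OF cont]) (auto intro: continuous_intros)
    have "\<exists>a' b'. -b \<le> a' \<and> a' < b' \<and> b' \<le> -a \<and> g ` {a'..b'} = {c..d}"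
      by (rule cover_pos[OF contg, of "-s" "-t"]) (use s t False cd in \<open>auto simp: g_def\<close>)
    then obtain a' b' where ab: "-b \<le> a'" "a' < b'" "b' \<le> -a" "g ` {a'..b'} = {c..d}" by blast
    have "g ` {a'..b'} = f ` (uminus ` {a'..b'})" unfolding g_def by (rule image_image[symmetric])
    hence "f ` {-b'..-a'} = {c..d}" using ab(4) by simp
    thus ?thesis using ab by (intro exI[of _ "-b'"] exI[of _ "-a'"]) auto
  qed
qed


primrec chainT :: "(real \<Rightarrow> real) \<Rightarrow> (nat \<Rightarrow> real) \<Rightarrow> (nat \<Rightarrow> real) \<Rightarrow> nat \<Rightarrow> real \<times> real" where
  "chainT f lo hi 0 = (lo 0, hi 0)"
| "chainT f lo hi (Suc n) = (SOME p. lo (Suc n) \<le> fst p \<and> fst p < snd p \<and> snd p \<le> hi (Suc n) \<and>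
      f ` {fst p..snd p} = {fst (chainT f lo hi n)..snd (chainT f lo hi n)})"

lemma chainT_prop:
  fixes f :: "real \<Rightarrow> real"
  assumes lohi: "\<And>n. lo n < hi n"
    and cont: "\<And>n. continuous_on {lo (Suc n)..hi (Suc n)} f"
    and cov: "\<And>n. {lo n..hi n} \<subseteq> f ` {lo (Suc n)..hi (Suc n)}"
  shows "lo n \<le> fst (chainT f lo hi n) \<and> fst (chainT f lo hi n) < snd (chainT f lo hi n)
     \<and> snd (chainT f lo hi n) \<le> hi n"
proof (induction n)
  case 0
  then show ?case using lohi[of 0] by simp
next
  case (Suc n)
  let ?c = "fst (chainT f lo hi n)" and ?d = "snd (chainT f lo hi n)"
  have "?c \<in> f ` {lo (Suc n)..hi (Suc n)}" "?d \<in> f ` {lo (Suc n)..hi (Suc n)}"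
    using Suc cov[of n] by auto
  then obtain a' b' where ab: "lo (Suc n) \<le> a'" "a' < b'" "b' \<le> hi (Suc n)" "f ` {a'..b'} = {?c..?d}"
    using cover[OF cont[of n], of ?c ?d] Suc by blast
  have "\<exists>p. lo (Suc n) \<le> fst p \<and> fst p < snd p \<and> snd p \<le> hi (Suc n) \<and>
      f ` {fst p..snd p} = {?c..?d}"
    using ab by (intro exI[of _ "(a', b')"]) auto
  from someI_ex[OF this] show ?case by simp
qed

lemma chainT_img:
  fixes f :: "real \<Rightarrow> real"
  assumes lohi: "\<And>n. lo n < hi n"
    and cont: "\<And>n. continuous_on {lo (Suc n)..hi (Suc n)} f"
    and cov: "\<And>n. {lo n..hi n} \<subseteq> f ` {lo (Suc n)..hi (Suc n)}"
  shows "f ` {fst (chainT f lo hi (Suc n))..snd (chainT f lo hi (Suc n))}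
      = {fst (chainT f lo hi n)..snd (chainT f lo hi n)}"
proof -
  let ?c = "fst (chainT f lo hi n)" and ?d = "snd (chainT f lo hi n)"
  have Suc: "lo n \<le> ?c" "?c < ?d" "?d \<le> hi n" using chainT_prop[of lo hi f n, OF lohi cont cov] by auto
  have "?c \<in> f ` {lo (Suc n)..hi (Suc n)}" "?d \<in> f ` {lo (Suc n)..hi (Suc n)}"
    using Suc cov[of n] by auto
  then obtain a' b' where ab: "lo (Suc n) \<le> a'" "a' < b'" "b' \<le> hi (Suc n)" "f ` {a'..b'} = {?c..?d}"
    using cover[OF cont[of n], of ?c ?d] Suc by blast
  have "\<exists>p. lo (Suc n) \<le> fst p \<and> fst p < snd p \<and> snd p \<le> hi (Suc n) \<and>
      f ` {fst p..snd p} = {?c..?d}"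
    using ab by (intro exI[of _ "(a', b')"]) auto
  from someI_ex[OF this] show ?thesis by simp
qed


lemma funpow_mult_fix:
  assumes "(f ^^ m) x = x"
  shows "(f ^^ (m * k)) x = x"
proof (induction k)
  case 0 then show ?case by simp
next
  case (Suc k)
  have "(f ^^ (m * Suc k)) x = (f ^^ m) ((f ^^ (m * k)) x)"
    by (simp add: funpow_add)
  then show ?case using Suc assms by simp
qed

lemma funpow_maps01:
  fixes f :: "real \<Rightarrow> real"
  assumes "f ` {0..1} = {0..1}" "x \<in> {0..1}"
  shows "(f ^^ k) x \<in> {0..1}"
  using assms by (induction k) auto

lemma generic:
  fixes f :: "real \<Rightarrow> real"
  assumes cont: "continuous_on {0..1} f" and surj: "f ` {0..1} = {0..1}" and m: "m > 0"
    and u: "u \<in> {0..1}" and v: "v \<in> {0..1}" and uper: "(f ^^ m) u = u" and vper: "(f ^^ m) v = v"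
    and uv: "u < v" and prp: "{u..v} \<noteq> {0..1}"
    and ab: "0 \<le> a" "a < b" "b \<le> 1" and s: "s \<in> {a..b}" and t: "t \<in> {a..b}"
    and fs: "f s \<le> u" and ft: "v \<le> f t"
    and disj: "{a..b} \<inter> {min ((f ^^ (m - 1)) u) ((f ^^ (m - 1)) v) .. max ((f ^^ (m - 1)) u) ((f ^^ (m - 1)) v)}
       \<subseteq> {min ((f ^^ (m - 1)) u) ((f ^^ (m - 1)) v), max ((f ^^ (m - 1)) u) ((f ^^ (m - 1)) v)}"
  shows "admits_splitting_seq f"
proof -
  define F where "F n = f ^^ ((m - 1) * n)" for n
  define lo where "lo n = min (F n u) (F n v)" for n
  define hi where "hi n = max (F n u) (F n v)" for n
  have F01: "F n x \<in> {0..1}" if "x \<in> {0..1}" for n x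
    unfolding F_def using funpow_maps01[OF surj that] .
  have Fstep: "f (F (Suc n) x) = F n x" if "(f ^^ m) x = x" for n x
  proof -
    have e: "Suc ((m - 1) * Suc n) = (m - 1) * n + m" using m by (cases m) auto
    have "f (F (Suc n) x) = (f ^^ (Suc ((m - 1) * Suc n))) x" unfolding F_def by simp
    also have "\<dots> = (f ^^ ((m - 1) * n)) ((f ^^ m) x)" unfolding e by (simp add: funpow_add)
    finally show ?thesis using that unfolding F_def by simp
  qed
  have Fback: "(f ^^ n) (F n x) = x" if "(f ^^ m) x = x" for n x
  proof -
    have e: "n + (m - 1) * n = m * n" using m by (cases m) auto
    have "(f ^^ n) (F n x) = (f ^^ (n + (m - 1) * n)) x" unfolding F_def by (simp add: funpow_add)
    then show ?thesis unfolding e using funpow_mult_fix[OF that] by simp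
  qed
  have Finj: "F n u \<noteq> F n v" for n
    using Fback[OF uper, of n] Fback[OF vper, of n] uv by auto
  have Fper: "F (m * k) x = x" if "(f ^^ m) x = x" for k x
  proof -
    have e: "(m - 1) * (m * k) = m * ((m - 1) * k)" by simp
    show ?thesis unfolding F_def e using funpow_mult_fix[OF that] by simp
  qed
  have F1: "F (m * k + 1) x = F 1 x" if "(f ^^ m) x = x" for k x
  proof -
    have e: "(m - 1) * (m * k + 1) = (m - 1) + m * ((m - 1) * k)" by (simp add: algebra_simps)
    have "F (m * k + 1) x = (f ^^ (m - 1)) ((f ^^ (m * ((m - 1) * k))) x)"
      unfolding F_def e by (simp add: funpow_add)
    then show ?thesis using funpow_mult_fix[OF that] unfolding F_def by simp
  qed
  have lohi: "lo n < hi n" for n using Finj[of n] unfolding lo_def hi_def by auto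
  have lohi01: "0 \<le> lo n" "hi n \<le> 1" for n
    using F01[OF u, of n] F01[OF v, of n] unfolding lo_def hi_def by auto
  have contn: "continuous_on {lo n..hi n} f" for n
    using cont lohi01[of n] by (auto intro: continuous_on_subset)
  have cov: "{lo n..hi n} \<subseteq> f ` {lo (Suc n)..hi (Suc n)}" for n
  proof -
    have conn: "connected (f ` {lo (Suc n)..hi (Suc n)})"
      by (rule connected_continuous_image[OF contn connected_Icc])
    have "F n u \<in> f ` {lo (Suc n)..hi (Suc n)}"
      using Fstep[OF uper, of n] unfolding lo_def hi_def by (metis atLeastAtMost_iff image_eqI max.cobounded1 min.cobounded1)
    moreover have "F n v \<in> f ` {lo (Suc n)..hi (Suc n)}"
      using Fstep[OF vper, of n] unfolding lo_def hi_def by (metis atLeastAtMost_iff image_eqI max.cobounded2 min.cobounded2)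
    ultimately show ?thesis using conn_sub[OF conn] unfolding lo_def hi_def by blast
  qed
  define l where "l n = fst (chainT f lo hi n)" for n
  define r where "r n = snd (chainT f lo hi n)" for n
  have lr: "lo n \<le> l n" "l n < r n" "r n \<le> hi n" for n
    using chainT_prop[of lo hi f n, OF lohi contn cov] unfolding l_def r_def by auto
  have img: "f ` {l (Suc n)..r (Suc n)} = {l n..r n}" for n
    using chainT_img[of lo hi f n, OF lohi contn cov] unfolding l_def r_def by auto
  have lo0: "lo 0 = u" "hi 0 = v" using uv unfolding lo_def hi_def F_def by auto
  have proper: "{l n..r n} \<noteq> {0..1}" for n
  proof (induction n)
    case 0
    have "l 0 = u" "r 0 = v" unfolding l_def r_def using lo0 by auto
    then show ?case using prp by simp
  next
    case (Suc n)
    then show ?case using img[of n] surj by auto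
  qed
  have tight: "tight_seq f l r"
    unfolding tight_seq_def
  proof (intro conjI allI)
    fix n
    show "0 \<le> l n" using lr[of n] lohi01[of n] by auto
    show "l n \<le> r n" using lr[of n] by auto
    show "r n \<le> 1" using lr[of n] lohi01[of n] by auto
    show "{l n..r n} \<noteq> {0..1}" by (rule proper)
    show "f ` {l (Suc n)..r (Suc n)} = {l n..r n}" by (rule img)
  next
    show "\<exists>n0. \<forall>n\<ge>n0. l n < r n" using lr by blast
  qed
  define N where "N = range (\<lambda>k. m * k + 1)"
  have infN: "infinite N" unfolding N_def
    by (rule range_inj_infinite) (use m in \<open>auto simp: inj_on_def\<close>)
  have abcov: "{u..v} \<subseteq> f ` {a..b}"
  proof -
    have contab: "continuous_on {a..b} f" using cont ab by (auto intro: continuous_on_subset)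
    have conn: "connected (f ` {a..b})"
      by (rule connected_continuous_image[OF contab connected_Icc])
    have "{min (f s) (f t)..max (f s) (f t)} \<subseteq> f ` {a..b}"
      using conn_sub[OF conn] s t by blast
    then show ?thesis using fs ft uv by auto
  qed
  have split: "\<exists>a b. 0 \<le> a \<and> a < b \<and> b \<le> 1 \<and>
            {a..b} \<inter> {l n..r n} \<subseteq> {l n, r n} \<and> f ` {a..b} = f ` {l n..r n}" if "n \<in> N" for n
  proof -
    obtain k where n: "n = m * k + 1" using \<open>n \<in> N\<close> unfolding N_def by auto
    have fimg: "f ` {l n..r n} = {l (m * k)..r (m * k)}" using img[of "m * k"] n by simp
    have "lo (m * k) = u" "hi (m * k) = v"
      using Fper[OF uper, of k] Fper[OF vper, of k] uv unfolding lo_def hi_def by auto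
    hence "{l (m * k)..r (m * k)} \<subseteq> {u..v}" using lr[of "m * k"] by auto
    hence sub: "{l (m * k)..r (m * k)} \<subseteq> f ` {a..b}" using abcov by blast
    have contab: "continuous_on {a..b} f" using cont ab by (auto intro: continuous_on_subset)
    obtain a' b' where ab': "a \<le> a'" "a' < b'" "b' \<le> b" "f ` {a'..b'} = {l (m * k)..r (m * k)}"
    proof -
      have "l (m * k) \<in> f ` {a..b}" "r (m * k) \<in> f ` {a..b}" using sub lr(2)[of "m * k"] by auto
      then show ?thesis using cover[OF contab lr(2)[of "m * k"]] that by blast
    qed
    have lon: "lo n = min ((f ^^ (m - 1)) u) ((f ^^ (m - 1)) v)"
      "hi n = max ((f ^^ (m - 1)) u) ((f ^^ (m - 1)) v)"
      unfolding lo_def hi_def n F1[OF uper] F1[OF vper] by (simp_all add: F_def)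
    have "{a'..b'} \<inter> {l n..r n} \<subseteq> {l n, r n}"
    proof
      fix x assume x: "x \<in> {a'..b'} \<inter> {l n..r n}"
      hence "x \<in> {a..b} \<inter> {lo n..hi n}" using ab' lr[of n] by auto
      hence "x = lo n \<or> x = hi n" using disj unfolding lon by blast
      then show "x \<in> {l n, r n}" using x lr[of n] by auto
    qed
    then show ?thesis using ab ab' fimg by (intro exI[of _ a'] exI[of _ b']) auto
  qed
  have "splitting_seq f l r"
    unfolding splitting_seq_def using tight infN split by blast
  then show ?thesis unfolding admits_splitting_seq_def by blast
qed


theorem lemma3p8:
  fixes f :: "real \<Rightarrow> real" and m :: nat
  assumes "continuous_on {0..1} f"
    and "f ` {0..1} = {0..1}"
    and "m > 2"
    and "\<exists>x\<in>{0..1}. periodic_point f m x"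
  shows "admits_splitting_seq f"
proof -
  note cont = assms(1) and surj = assms(2)
  have m0: "m > 0" using assms(3) by simp
  obtain x0 where x0: "x0 \<in> {0..1}" "periodic_point f m x0" using assms(4) by blast
  have per: "(f ^^ m) x0 = x0" and nper: "\<And>i. 0 < i \<Longrightarrow> i < m \<Longrightarrow> (f ^^ i) x0 \<noteq> x0"
    using x0(2) unfolding periodic_point_def by auto
  define P where "P = (\<lambda>i. (f ^^ i) x0) ` {..<m}"
  have finP: "finite P" unfolding P_def by simp
  have x0P: "x0 \<in> P" unfolding P_def using m0 by (auto intro: image_eqI[of _ _ 0])
  have neP: "P \<noteq> {}" using x0P by auto
  have modm: "(f ^^ n) x0 = (f ^^ (n mod m)) x0" for n
  proof -
    have "(f ^^ n) x0 = (f ^^ (n mod m + m * (n div m))) x0" by simp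
    also have "\<dots> = (f ^^ (n mod m)) ((f ^^ (m * (n div m))) x0)" by (simp only: funpow_add o_apply)
    also have "\<dots> = (f ^^ (n mod m)) x0" using funpow_mult_fix[OF per] by simp
    finally show ?thesis .
  qed
  have Pclos: "f p \<in> P" if pP: "p \<in> P" for p
  proof -
    obtain i where i: "p = (f ^^ i) x0" using pP unfolding P_def by auto
    have "f p = (f ^^ (Suc i)) x0" using i by simp
    also have "\<dots> = (f ^^ (Suc i mod m)) x0" by (rule modm)
    finally show ?thesis unfolding P_def using m0 by auto
  qed
  have Pclos2: "(f ^^ k) p \<in> P" if "p \<in> P" for p k
    using that by (induction k) (auto intro: Pclos)
  have Pper: "(f ^^ m) p = p" if pP: "p \<in> P" for p
  proof -
    obtain i where i: "p = (f ^^ i) x0" using pP unfolding P_def by auto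
    have "(f ^^ m) p = (f ^^ (m + i)) x0" using i by (simp add: funpow_add)
    also have "\<dots> = (f ^^ i) ((f ^^ m) x0)" by (simp add: funpow_add add.commute)
    finally show ?thesis using per i by simp
  qed
  have P01: "p \<in> {0..1}" if "p \<in> P" for p
    using that funpow_maps01[OF surj x0(1)] unfolding P_def by auto
  have Pnp: "(f ^^ k) p \<noteq> p" if pP: "p \<in> P" and k: "0 < k" "k < m" for p k
  proof
    assume fk: "(f ^^ k) p = p"
    obtain i where i: "p = (f ^^ i) x0" "i < m" using pP unfolding P_def by auto
    have bk: "(f ^^ (m - i)) p = x0"
    proof -
      have "(f ^^ (m - i)) p = (f ^^ (m - i + i)) x0" using i by (simp only: funpow_add o_apply)
      also have "m - i + i = m" using i by simp
      finally show ?thesis using per by simp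
    qed
    have "(f ^^ k) x0 = (f ^^ (k + (m - i))) p" using bk by (simp add: funpow_add)
    also have "\<dots> = (f ^^ (m - i)) ((f ^^ k) p)" by (simp only: add.commute[of k] funpow_add o_apply)
    also have "\<dots> = x0" using fk bk by simp
    finally show False using nper k by simp
  qed
  have fne: "f p \<noteq> p" if "p \<in> P" for p
    using Pnp[OF that, of 1] assms(3) by simp
  have ffne: "f (f p) \<noteq> p" if "p \<in> P" for p
    using Pnp[OF that, of 2] assms(3) by (simp add: numeral_2_eq_2)
  have Pm1: "(f ^^ (m - 1)) (f p) = p" if "p \<in> P" for p
  proof -
    have "(f ^^ (m - 1)) (f p) = (f ^^ (Suc (m - 1))) p" by (simp only: funpow_Suc_right o_apply)
    then show ?thesis using Pper[OF that] m0 by simp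
  qed
  have fm1: "f ((f ^^ (m - 1)) p) = p" if "p \<in> P" for p
  proof -
    have "f ((f ^^ (m - 1)) p) = (f ^^ (Suc (m - 1))) p" by simp
    then show ?thesis using Pper[OF that] m0 by simp
  qed
  define q where "q = Min P"
  define Q where "Q = Max P"
  have qP: "q \<in> P" and QP: "Q \<in> P" unfolding q_def Q_def using finP neP by auto
  have bnd: "q \<le> p" "p \<le> Q" if "p \<in> P" for p
    unfolding q_def Q_def using finP that by auto
  have q01: "0 \<le> q" and Q01: "Q \<le> 1" using P01[OF qP] P01[OF QP] by auto
  have fqP: "f q \<in> P" and fQP: "f Q \<in> P" using Pclos qP QP by auto
  have qfq: "q < f q" using bnd(1)[OF fqP] fne[OF qP] by auto
  have fqQ: "f q \<le> Q" using bnd(2)[OF fqP] .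
  have qQ: "q < Q" using qfq fqQ by simp
  have fQQ: "f Q < Q" using bnd(2)[OF fQP] fne[OF QP] by auto
  have gen: "admits_splitting_seq f"
    if "u \<in> P" "v \<in> P" "u < v" "{u..v} \<noteq> {0..1}" "0 \<le> a" "a < b" "b \<le> 1"
      "s \<in> {a..b}" "t \<in> {a..b}" "f s \<le> u" "v \<le> f t"
      "{a..b} \<inter> {min ((f ^^ (m - 1)) u) ((f ^^ (m - 1)) v) .. max ((f ^^ (m - 1)) u) ((f ^^ (m - 1)) v)}
       \<subseteq> {min ((f ^^ (m - 1)) u) ((f ^^ (m - 1)) v), max ((f ^^ (m - 1)) u) ((f ^^ (m - 1)) v)}"
    for u v a b s t
    using generic[OF cont surj m0 P01[OF that(1)] P01[OF that(2)] Pper[OF that(1)] Pper[OF that(2)]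
        that(3-)] .
  show ?thesis
  proof (cases "f Q = q")
    case False
    define x' where "x' = (f ^^ (m - 1)) q"
    have x'P: "x' \<in> P" unfolding x'_def using Pclos2[OF qP] .
    have fx': "f x' = q" unfolding x'_def using fm1[OF qP] .
    have x'q: "q < x'" using bnd(1)[OF x'P] fx' fne[OF qP] by (metis order_le_less)
    have x'Q: "x' < Q" using bnd(2)[OF x'P] fx' False by (metis order_le_less)
    show ?thesis
    proof (cases "f q \<le> f Q")
      case True
      have fqQ': "f q < Q" using fqQ True fQQ by simp
      have prp: "{q..f q} \<noteq> {0..1}"
      proof
        assume "{q..f q} = {0..1}"
        hence "q = 0 \<and> f q = 1" using qfq by (auto simp: Icc_eq_Icc)
        thus False using fqQ' Q01 by linarith
      qed
      have e: "(f ^^ (m - 1)) q = x'" "(f ^^ (m - 1)) (f q) = q" using x'_def Pm1[OF qP] by auto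
      show ?thesis
        by (rule gen[of q "f q" x' Q x' Q]) (use qP fqP qfq prp x'q x'Q q01 Q01 fx' True e in auto)
    next
      case fl: False
      have fQq: "q < f Q" using bnd(1)[OF fQP] False by (metis order_le_less)
      have prp: "{q..f Q} \<noteq> {0..1}"
      proof
        assume "{q..f Q} = {0..1}"
        hence "q = 0 \<and> f Q = 1" using fQq by (auto simp: Icc_eq_Icc)
        thus False using fQQ Q01 by linarith
      qed
      have e: "(f ^^ (m - 1)) q = x'" "(f ^^ (m - 1)) (f Q) = Q" using x'_def Pm1[OF QP] by auto
      show ?thesis
        by (rule gen[of q "f Q" q x' x' q]) (use qP fQP fQq prp x'q x'Q q01 Q01 fx' fl e in auto)
    qed
  next
    case True
    have fqneQ: "f q \<noteq> Q" using ffne[OF qP] True by auto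
    define z' where "z' = (f ^^ (m - 1)) Q"
    have z'P: "z' \<in> P" unfolding z'_def using Pclos2[OF QP] .
    have fz': "f z' = Q" unfolding z'_def using fm1[OF QP] .
    have z'Q: "z' < Q" using bnd(2)[OF z'P] fz' True qQ by (metis order_le_less order_less_irrefl)
    have qz': "q \<le> z'" using bnd(1)[OF z'P] .
    have fqQ': "f q < Q" using fqQ fqneQ by simp
    have prp: "{f q..Q} \<noteq> {0..1}"
    proof
      assume "{f q..Q} = {0..1}"
      hence "f q = 0 \<and> Q = 1" using fqQ' by (auto simp: Icc_eq_Icc)
      thus False using qfq q01 by linarith
    qed
    have e: "(f ^^ (m - 1)) (f q) = q" "(f ^^ (m - 1)) Q = z'" using z'_def Pm1[OF qP] by auto
    show ?thesis
      by (rule gen[of "f q" Q z' Q Q z']) (use QP fqP fqQ' prp z'Q qz' q01 Q01 fz' True e qfq in auto)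
  qed
qed

end
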